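(* Let $P$ be a set of $n\geq 5$ points in general position in the plane. Then $\operatorname{diam}(D(P))\in\{2,3,4\}$ if $n=5$, $\operatorname{diam}(D(P))\in\{2,3\}$ if $n\in\{6,7,8\}$, and $\operatorname{diam}(D(P))=2$ if $n\geq 9$.
   Context: A set of points in the plane is in general position if no three of its points are collinear. The disjointness graph of segments $D(P)$ of $P$ is the graph whose vertices are all $\binom{n}{2}$ closed straight-line segments with both endpoints in $P$, two such segments being adjacent if and only if they are disjoint. The diameter $\operatorname{diam}(G)$ of a connected graph $G$ is the largest distance (length of a shortest path) between two vertices of $G$. *)

theory Defs
  imports "HOL-Analysis.Analysis"
begin

definition general_position :: "(real^2) set \<Rightarrow> bool" where
  "general_position P \<longleftrightarrow>
     (\<forall>a\<in>P. \<forall>b\<in>P. \<forall>c\<in>P. a \<noteq> b \<and> a \<noteq> c \<and> b \<noteq> c \<longrightarrow> \<not> collinear {a, b, c})"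

text \<open>A vertex of D(P) is a segment with both endpoints in P, represented by its
  (unordered) pair of endpoints {a,b}; the closed segment itself is closed_segment a b.\<close>

definition seg_vertices :: "(real^2) set \<Rightarrow> (real^2) set set" where
  "seg_vertices P = {{a, b} | a b. a \<in> P \<and> b \<in> P \<and> a \<noteq> b}"

definition seg_of :: "(real^2) set \<Rightarrow> (real^2) set" where
  "seg_of e = closed_segment (SOME a. a \<in> e) (SOME b. b \<in> e \<and> b \<noteq> (SOME a. a \<in> e))"

definition disj_adj :: "(real^2) set \<Rightarrow> (real^2) set \<Rightarrow> (real^2) set \<Rightarrow> bool" where
  "disj_adj P e f \<longleftrightarrow> e \<in> seg_vertices P \<and> f \<in> seg_vertices P \<and> seg_of e \<inter> seg_of f = {}"

definition is_walk :: "'v set \<Rightarrow> ('v \<Rightarrow> 'v \<Rightarrow> bool) \<Rightarrow> 'v list \<Rightarrow> bool" where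
  "is_walk V E xs \<longleftrightarrow> xs \<noteq> [] \<and> set xs \<subseteq> V \<and> (\<forall>i. Suc i < length xs \<longrightarrow> E (xs ! i) (xs ! Suc i))"

definition walk_of_len :: "'v set \<Rightarrow> ('v \<Rightarrow> 'v \<Rightarrow> bool) \<Rightarrow> 'v \<Rightarrow> 'v \<Rightarrow> nat \<Rightarrow> bool" where
  "walk_of_len V E u v k \<longleftrightarrow>
     (\<exists>xs. is_walk V E xs \<and> hd xs = u \<and> last xs = v \<and> length xs = Suc k)"

definition graph_connected :: "'v set \<Rightarrow> ('v \<Rightarrow> 'v \<Rightarrow> bool) \<Rightarrow> bool" where
  "graph_connected V E \<longleftrightarrow> (\<forall>u\<in>V. \<forall>v\<in>V. \<exists>k. walk_of_len V E u v k)"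

definition graph_dist :: "'v set \<Rightarrow> ('v \<Rightarrow> 'v \<Rightarrow> bool) \<Rightarrow> 'v \<Rightarrow> 'v \<Rightarrow> nat" where
  "graph_dist V E u v = (LEAST k. walk_of_len V E u v k)"

definition graph_diam :: "'v set \<Rightarrow> ('v \<Rightarrow> 'v \<Rightarrow> bool) \<Rightarrow> nat" where
  "graph_diam V E = Max {graph_dist V E u v | u v. u \<in> V \<and> v \<in> V}"

abbreviation diam_D :: "(real^2) set \<Rightarrow> nat" where
  "diam_D P \<equiv> graph_diam (seg_vertices P) (disj_adj P)"

end

theory Submission
  imports Defs
begin

definition cross :: "real^2 \<Rightarrow> real^2 \<Rightarrow> real^2 \<Rightarrow> real" where
  "cross a b c = (b$1 - a$1)*(c$2 - a$2) - (b$2 - a$2)*(c$1 - a$1)"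

definition affl :: "(real^2 \<Rightarrow> real) \<Rightarrow> bool" where
  "affl L \<longleftrightarrow> (\<forall>p q t. L ((1-t) *\<^sub>R p + t *\<^sub>R q) = (1-t) * L p + t * L q)"

lemma affl_cross: "affl (cross a b)"
  unfolding affl_def cross_def by (simp add: algebra_simps)

lemma affl_neg: "affl L \<Longrightarrow> affl (\<lambda>z. - L z)"
  unfolding affl_def by (simp add: algebra_simps)

lemma affl_ge0:
  assumes "affl L" "L p \<ge> 0" "L q \<ge> 0" "z \<in> closed_segment p q"
  shows "L z \<ge> 0"
proof -
  obtain u where u: "0 \<le> u" "u \<le> 1" "z = (1-u) *\<^sub>R p + u *\<^sub>R q"
    using assms(4) unfolding closed_segment_def by auto
  then have "L z = (1-u) * L p + u * L q" using assms(1) unfolding affl_def by auto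
  then show ?thesis using u assms by simp
qed

lemma affl_lt0:
  assumes "affl L" "L p < 0" "L q < 0" "z \<in> closed_segment p q"
  shows "L z < 0"
proof -
  obtain u where u: "0 \<le> u" "u \<le> 1" "z = (1-u) *\<^sub>R p + u *\<^sub>R q"
    using assms(4) unfolding closed_segment_def by auto
  then have "L z = (1-u) * L p + u * L q" using assms(1) unfolding affl_def by auto
  moreover have "(1-u) * L p \<le> 0" using u assms by (simp add: mult_nonneg_nonpos)
  moreover have "u * L q \<le> 0" using u assms by (simp add: mult_nonneg_nonpos)
  moreover have "(1-u) * L p < 0 \<or> u * L q < 0"
    using u assms by (cases "u = 0") (auto simp: mult_pos_neg)
  ultimately show ?thesis by linarith
qed

definition segdisj :: "real^2 \<Rightarrow> real^2 \<Rightarrow> real^2 \<Rightarrow> real^2 \<Rightarrow> bool" where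
  "segdisj p q r s \<longleftrightarrow> closed_segment p q \<inter> closed_segment r s = {}"

lemma sepA:
  assumes "affl L" "L p \<ge> 0" "L q \<ge> 0" "L r < 0" "L s < 0"
  shows "segdisj p q r s \<and> segdisj r s p q"
  unfolding segdisj_def using affl_ge0[OF assms(1-3)] affl_lt0[OF assms(1,4,5)]
  by (auto simp: less_le_not_le)

lemma sepB:
  assumes "affl L" "L p \<le> 0" "L q \<le> 0" "L r > 0" "L s > 0"
  shows "segdisj p q r s \<and> segdisj r s p q"
  using sepA[OF affl_neg[OF assms(1)]] assms(2-5) by simp

lemma same_side:
  assumes "affl L" "L p = 0" "L q = 0" "L x * L y > 0"
  shows "segdisj x y p q \<and> segdisj p q x y"
proof (cases "L x > 0")
  case True
  then have "L y > 0" using assms(4) by (meson not_less_iff_gr_or_eq zero_less_mult_pos)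
  then show ?thesis using sepB[OF assms(1)] assms True by simp
next
  case False
  then have "L x < 0" "L y < 0" using assms(4)
    by (auto simp: zero_less_mult_iff)
  then show ?thesis using sepA[OF assms(1)] assms by simp
qed

lemma cross_zero_collinear:
  assumes "cross a b c = 0"
  shows "collinear {a, b, c}"
proof (cases "a = b")
  case True then show ?thesis by simp
next
  case False
  define u where "u = a - b"
  define w where "w = c - b"
  have u0: "u \<noteq> 0" using False u_def by simp
  have cr: "u$1 * w$2 = u$2 * w$1" using assms unfolding cross_def u_def w_def
    by (simp add: algebra_simps)
  have "\<exists>t. w = t *\<^sub>R u"
  proof (cases "u$1 = 0")
    case True
    then have "u$2 \<noteq> 0" using u0 by (metis exhaust_2 vec_eq_iff zero_index)
    then have "w$1 = 0" using cr True by simp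
    show ?thesis
      apply (rule exI[of _ "w$2 / u$2"])
      using \<open>u$2 \<noteq> 0\<close> \<open>w$1 = 0\<close> True
      by (simp add: vec_eq_iff forall_2)
  next
    case False
    show ?thesis
      apply (rule exI[of _ "w$1 / u$1"])
      using False cr by (simp add: vec_eq_iff forall_2 field_simps)
  qed
  then have "collinear {0, u, w}" by (auto simp: collinear_lemma)
  moreover have "collinear {a,b,c} \<longleftrightarrow> collinear {0, a - b, c - b}"
    by (rule collinear_3) simp
  ultimately show ?thesis by (simp add: u_def w_def)
qed

lemma gp_cross:
  assumes "general_position P" "a \<in> P" "b \<in> P" "c \<in> P" "a \<noteq> b" "a \<noteq> c" "b \<noteq> c"
  shows "cross a b c \<noteq> 0"
  using assms cross_zero_collinear unfolding general_position_def by blast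

lemma cross_self: "cross a b a = 0" "cross a b b = 0"
  unfolding cross_def by (simp_all add: algebra_simps)

lemma seg_of_pair:
  assumes "a \<noteq> b"
  shows "seg_of {a, b} = closed_segment a b"
proof -
  define s where "s = (SOME x. x \<in> {a, b})"
  have s: "s \<in> {a,b}" unfolding s_def by (rule someI[of _ a]) simp
  define t where "t = (SOME y. y \<in> {a,b} \<and> y \<noteq> s)"
  have "\<exists>y. y \<in> {a,b} \<and> y \<noteq> s" using s assms by auto
  then have t: "t \<in> {a,b} \<and> t \<noteq> s" unfolding t_def by (rule someI_ex)
  have "seg_of {a,b} = closed_segment s t" unfolding seg_of_def s_def t_def by simp
  then show ?thesis using s t by (auto simp: closed_segment_commute)
qed

lemma adj_intro:
  assumes "p \<in> P" "q \<in> P" "r \<in> P" "s \<in> P" "p \<noteq> q" "r \<noteq> s" "segdisj p q r s"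
  shows "disj_adj P {p, q} {r, s}"
  using assms unfolding disj_adj_def seg_vertices_def segdisj_def
  by (auto simp: seg_of_pair)

lemma is_walk_single: "is_walk V E [x] \<longleftrightarrow> x \<in> V"
  unfolding is_walk_def by auto

lemma is_walk_Cons2: "is_walk V E (x # y # xs) \<longleftrightarrow> x \<in> V \<and> E x y \<and> is_walk V E (y # xs)"
proof
  assume h: "is_walk V E (x # y # xs)"
  have "E x y" using h unfolding is_walk_def by (metis Suc_less_eq length_Cons nth_Cons_0 nth_Cons_Suc zero_less_Suc)
  moreover have "is_walk V E (y # xs)" unfolding is_walk_def
  proof (intro conjI allI impI)
    show "set (y # xs) \<subseteq> V" using h unfolding is_walk_def by auto
    fix i assume "Suc i < length (y # xs)"
    then have "Suc (Suc i) < length (x # y # xs)" by simp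
    then have "E ((x # y # xs) ! Suc i) ((x # y # xs) ! Suc (Suc i))" using h unfolding is_walk_def by blast
    then show "E ((y # xs) ! i) ((y # xs) ! Suc i)" by simp
  qed simp
  ultimately show "x \<in> V \<and> E x y \<and> is_walk V E (y # xs)" using h unfolding is_walk_def by auto
next
  assume h: "x \<in> V \<and> E x y \<and> is_walk V E (y # xs)"
  show "is_walk V E (x # y # xs)" unfolding is_walk_def
  proof (intro conjI allI impI)
    show "set (x # y # xs) \<subseteq> V" using h unfolding is_walk_def by auto
    fix i assume i: "Suc i < length (x # y # xs)"
    show "E ((x # y # xs) ! i) ((x # y # xs) ! Suc i)"
    proof (cases i)
      case 0 then show ?thesis using h by simp
    next
      case (Suc j)
      then have "Suc j < length (y # xs)" using i by simp
      then show ?thesis using h Suc unfolding is_walk_def by simp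
    qed
  qed simp
qed

definition close :: "(real^2) set \<Rightarrow> nat \<Rightarrow> (real^2) set \<Rightarrow> (real^2) set \<Rightarrow> bool" where
  "close P k u v \<longleftrightarrow> (\<exists>j\<le>k. walk_of_len (seg_vertices P) (disj_adj P) u v j)"

lemma adj_V: "disj_adj P u v \<Longrightarrow> u \<in> seg_vertices P \<and> v \<in> seg_vertices P"
  unfolding disj_adj_def by simp

lemma close_mono: "close P k u v \<Longrightarrow> k \<le> k' \<Longrightarrow> close P k' u v"
  unfolding close_def by (meson order_trans)

lemma close0: "u \<in> seg_vertices P \<Longrightarrow> close P k u u"
  unfolding close_def walk_of_len_def
  by (rule exI[of _ 0]) (auto intro!: exI[of _ "[u]"] simp: is_walk_single)

lemma close1: "disj_adj P u v \<Longrightarrow> 1 \<le> k \<Longrightarrow> close P k u v"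
  unfolding close_def walk_of_len_def
  by (rule exI[of _ 1]) (auto intro!: exI[of _ "[u,v]"] simp: is_walk_single is_walk_Cons2 dest: adj_V)

lemma close2: "disj_adj P u g \<Longrightarrow> disj_adj P g v \<Longrightarrow> 2 \<le> k \<Longrightarrow> close P k u v"
  unfolding close_def walk_of_len_def
  by (rule exI[of _ 2]) (auto intro!: exI[of _ "[u,g,v]"] simp: is_walk_single is_walk_Cons2 dest: adj_V)

lemma close3: "disj_adj P u g \<Longrightarrow> disj_adj P g h \<Longrightarrow> disj_adj P h v \<Longrightarrow> 3 \<le> k \<Longrightarrow> close P k u v"
  unfolding close_def walk_of_len_def
  by (rule exI[of _ 3]) (auto intro!: exI[of _ "[u,g,h,v]"] simp: is_walk_single is_walk_Cons2 dest: adj_V)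

lemma close4: "disj_adj P u g \<Longrightarrow> disj_adj P g h \<Longrightarrow> disj_adj P h i \<Longrightarrow> disj_adj P i v \<Longrightarrow> 4 \<le> k \<Longrightarrow> close P k u v"
  unfolding close_def walk_of_len_def
  by (rule exI[of _ 4]) (auto intro!: exI[of _ "[u,g,h,i,v]"] simp: is_walk_single is_walk_Cons2 dest: adj_V)

locale xconf =
  fixes P :: "(real^2) set" and LE LF :: "real^2 \<Rightarrow> real" and a1 a2 b1 b2 :: "real^2"
  assumes aE: "affl LE" and aF: "affl LF"
    and e1: "LE a1 = 0" and e2: "LE a2 = 0" and e3: "LE b1 > 0" and e4: "LE b2 < 0"
    and f1: "LF b1 = 0" and f2: "LF b2 = 0" and f3: "LF a1 > 0" and f4: "LF a2 < 0"
    and inP: "a1 \<in> P" "a2 \<in> P" "b1 \<in> P" "b2 \<in> P"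
begin

lemma one_core:
  assumes x: "x \<in> P" "LE x > 0" "LF x > 0"
  shows "close P 4 {a1,a2} {b1,b2}"
proof -
  have d: "a1 \<noteq> a2" "b1 \<noteq> x" "a2 \<noteq> b2" "a1 \<noteq> x" "b1 \<noteq> b2"
    using e1 e2 e3 e4 f1 f2 f3 f4 x by auto
  show ?thesis
    apply (rule close4[of _ _ "{b1,x}" "{a2,b2}" "{a1,x}"])
    apply (rule adj_intro; (use inP x d in simp)?)
    using sepB[OF aE, of a1 a2 b1 x] e1 e2 e3 x apply simp
    apply (rule adj_intro; (use inP x d in simp)?)
    using sepB[OF aE, of a2 b2 b1 x] e2 e4 e3 x apply simp
    apply (rule adj_intro; (use inP x d in simp)?)
    using sepB[OF aF, of a2 b2 a1 x] f2 f4 f3 x apply simp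
    apply (rule adj_intro; (use inP x d in simp)?)
    using sepB[OF aF, of b1 b2 a1 x] f1 f2 f3 x apply simp
    by simp
qed

lemma same_core:
  assumes x: "x \<in> P" "y \<in> P" "x \<noteq> y" "LE x * LE y > 0" "LF x * LF y > 0"
  shows "close P 2 {a1,a2} {b1,b2}"
proof -
  have d: "a1 \<noteq> a2" "b1 \<noteq> b2"
    using e1 e2 e3 e4 f1 f2 f3 f4 x by auto
  show ?thesis
    apply (rule close2[of _ _ "{x,y}"])
    apply (rule adj_intro; (use inP x d in simp)?)
    using same_side[OF aE e1 e2 x(4)] apply simp
    apply (rule adj_intro; (use inP x d in simp)?)
    using same_side[OF aF f1 f2 x(5)] apply simp
    by simp
qed

lemma two_core:
  assumes x: "x \<in> P" "LE x > 0" "LF x > 0"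
    and y: "y \<in> P" "LE y \<noteq> 0" "LF y \<noteq> 0" "x \<noteq> y"
  shows "close P 3 {a1,a2} {b1,b2}"
proof -
  have d: "a1 \<noteq> a2" "b1 \<noteq> x" "a2 \<noteq> b2" "a1 \<noteq> x" "b1 \<noteq> b2" "b1 \<noteq> y" "b2 \<noteq> y" "a2 \<noteq> y"
    using e1 e2 e3 e4 f1 f2 f3 f4 x y by auto
  consider "LE y > 0" "LF y > 0" | "LE y < 0" "LF y < 0" | "LE y > 0" "LF y < 0" | "LE y < 0" "LF y > 0"
    using y by (meson linorder_neqE_linordered_idom)
  then show ?thesis
  proof cases
    case 1
    then show ?thesis using same_core[of x y] x y close_mono by (simp add: zero_less_mult_iff)
  next
    case 2
    show ?thesis
      apply (rule close3[of _ _ "{b1,x}" "{a2,y}"])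
      apply (rule adj_intro; (use inP x y d in simp)?)
      using sepB[OF aE, of a1 a2 b1 x] e1 e2 e3 x apply simp
      apply (rule adj_intro; (use inP x y d in simp)?)
      using sepB[OF aE, of a2 y b1 x] e2 2 e3 x apply simp
      apply (rule adj_intro; (use inP x y d in simp)?)
      using sepA[OF aF, of b1 b2 a2 y] f1 f2 f4 2 apply simp
      by simp
  next
    case 3
    show ?thesis
      apply (rule close3[of _ _ "{b1,y}" "{a1,x}"])
      apply (rule adj_intro; (use inP x y d in simp)?)
      using sepB[OF aE, of a1 a2 b1 y] e1 e2 e3 3 apply simp
      apply (rule adj_intro; (use inP x y d in simp)?)
      using sepB[OF aF, of b1 y a1 x] f1 3 f3 x apply simp
      apply (rule adj_intro; (use inP x y d in simp)?)
      using sepB[OF aF, of b1 b2 a1 x] f1 f2 f3 x apply simp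
      by simp
  next
    case 4
    show ?thesis
      apply (rule close3[of _ _ "{b2,y}" "{a1,x}"])
      apply (rule adj_intro; (use inP x y d in simp)?)
      using sepA[OF aE, of a1 a2 b2 y] e1 e2 e4 4 apply simp
      apply (rule adj_intro; (use inP x y d in simp)?)
      using sepA[OF aE, of a1 x b2 y] e1 x e4 4 apply simp
      apply (rule adj_intro; (use inP x y d in simp)?)
      using sepB[OF aF, of b1 b2 a1 x] f1 f2 f3 x apply simp
      by simp
  qed
qed

end

context xconf begin

lemma flipE: "xconf P (\<lambda>z. - LE z) LF a1 a2 b2 b1"
  by (unfold_locales) (use aE aF e1 e2 e3 e4 f1 f2 f3 f4 inP affl_neg in auto)

lemma flipF: "xconf P LE (\<lambda>z. - LF z) a2 a1 b1 b2"
  by (unfold_locales) (use aE aF e1 e2 e3 e4 f1 f2 f3 f4 inP affl_neg in auto)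

lemma flipEF: "xconf P (\<lambda>z. - LE z) (\<lambda>z. - LF z) a2 a1 b2 b1"
  by (unfold_locales) (use aE aF e1 e2 e3 e4 f1 f2 f3 f4 inP affl_neg in auto)

lemma one_gen:
  assumes x: "x \<in> P" "LE x \<noteq> 0" "LF x \<noteq> 0"
  shows "close P 4 {a1,a2} {b1,b2}"
proof -
  have c1: "{b2,b1} = {b1,b2}" "{a2,a1} = {a1,a2}" by auto
  consider "LE x > 0" "LF x > 0" | "LE x < 0" "LF x > 0" | "LE x > 0" "LF x < 0" | "LE x < 0" "LF x < 0"
    using x by (meson linorder_neqE_linordered_idom)
  then show ?thesis
  proof cases
    case 1 then show ?thesis using one_core x by simp
  next
    case 2 then show ?thesis using xconf.one_core[OF flipE, of x] x c1 by simp
  next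
    case 3 then show ?thesis using xconf.one_core[OF flipF, of x] x c1 by simp
  next
    case 4 then show ?thesis using xconf.one_core[OF flipEF, of x] x c1 by simp
  qed
qed

lemma two_gen:
  assumes x: "x \<in> P" "LE x \<noteq> 0" "LF x \<noteq> 0"
    and y: "y \<in> P" "LE y \<noteq> 0" "LF y \<noteq> 0" "x \<noteq> y"
  shows "close P 3 {a1,a2} {b1,b2}"
proof -
  have c1: "{b2,b1} = {b1,b2}" "{a2,a1} = {a1,a2}" by auto
  consider "LE x > 0" "LF x > 0" | "LE x < 0" "LF x > 0" | "LE x > 0" "LF x < 0" | "LE x < 0" "LF x < 0"
    using x by (meson linorder_neqE_linordered_idom)
  then show ?thesis
  proof cases
    case 1 then show ?thesis using two_core x y by simp
  next
    case 2 then show ?thesis using xconf.two_core[OF flipE, of x y] x y c1 by simp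
  next
    case 3 then show ?thesis using xconf.two_core[OF flipF, of x y] x y c1 by simp
  next
    case 4 then show ?thesis using xconf.two_core[OF flipEF, of x y] x y c1 by simp
  qed
qed

end

locale sconf =
  fixes P :: "(real^2) set" and LE LF :: "real^2 \<Rightarrow> real" and c a b :: "real^2"
  assumes aE: "affl LE" and aF: "affl LF"
    and e1: "LE c = 0" and e2: "LE a = 0" and e3: "LE b > 0"
    and f1: "LF c = 0" and f2: "LF b = 0" and f3: "LF a > 0"
    and inP: "c \<in> P" "a \<in> P" "b \<in> P"
begin

lemma sh_negE:
  assumes x: "x \<in> P" "y \<in> P" "x \<noteq> y" "LE x < 0" "LE y < 0"
  shows "close P 2 {c,a} {c,b}"
proof -
  have d: "c \<noteq> a" "c \<noteq> b" using e1 e2 e3 f1 f2 f3 by auto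
  show ?thesis
    apply (rule close2[of _ _ "{x,y}"])
    apply (rule adj_intro; (use inP x d in simp)?)
    using sepA[OF aE, of c a x y] e1 e2 x apply simp
    apply (rule adj_intro; (use inP x d in simp)?)
    using sepA[OF aE, of c b x y] e1 e3 x apply simp
    by simp
qed

lemma sh_negF:
  assumes x: "x \<in> P" "y \<in> P" "x \<noteq> y" "LF x < 0" "LF y < 0"
  shows "close P 2 {c,a} {c,b}"
proof -
  have d: "c \<noteq> a" "c \<noteq> b" using e1 e2 e3 f1 f2 f3 by auto
  show ?thesis
    apply (rule close2[of _ _ "{x,y}"])
    apply (rule adj_intro; (use inP x d in simp)?)
    using sepA[OF aF, of c a x y] f1 f3 x apply simp
    apply (rule adj_intro; (use inP x d in simp)?)
    using sepA[OF aF, of c b x y] f1 f2 x apply simp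
    by simp
qed

lemma sh_pp:
  assumes x: "x \<in> P" "y \<in> P" "x \<noteq> y" "LE x > 0" "LE y > 0" "LF x > 0" "LF y > 0"
  shows "close P 2 {c,a} {c,b}"
proof -
  have d: "c \<noteq> a" "c \<noteq> b" using e1 e2 e3 f1 f2 f3 by auto
  show ?thesis
    apply (rule close2[of _ _ "{x,y}"])
    apply (rule adj_intro; (use inP x d in simp)?)
    using sepB[OF aE, of c a x y] e1 e2 x apply simp
    apply (rule adj_intro; (use inP x d in simp)?)
    using sepB[OF aF, of c b x y] f1 f2 x apply simp
    by simp
qed

lemma sh_3a:
  assumes x: "x \<in> P" "LE x < 0" "LF x > 0" and y: "y \<in> P" "LE y > 0" "LF y \<noteq> 0"
  shows "close P 3 {c,a} {c,b}"
proof -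
  have d: "c \<noteq> a" "c \<noteq> b" "y \<noteq> b" "x \<noteq> a" using e1 e2 e3 f1 f2 f3 x y by auto
  show ?thesis
    apply (rule close3[of _ _ "{y,b}" "{x,a}"])
    apply (rule adj_intro; (use inP x y d in simp)?)
    using sepB[OF aE, of c a y b] e1 e2 e3 y apply simp
    apply (rule adj_intro; (use inP x y d in simp)?)
    using sepB[OF aE, of x a y b] e2 e3 x y apply simp
    apply (rule adj_intro; (use inP x y d in simp)?)
    using sepB[OF aF, of c b x a] f1 f2 f3 x apply simp
    by simp
qed

lemma sh_3b:
  assumes x: "x \<in> P" "LF x < 0" "LE x > 0" and y: "y \<in> P" "LF y > 0" "LE y \<noteq> 0"
  shows "close P 3 {c,a} {c,b}"
proof -
  have d: "c \<noteq> a" "c \<noteq> b" "x \<noteq> b" "y \<noteq> a" using e1 e2 e3 f1 f2 f3 x y by auto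
  show ?thesis
    apply (rule close3[of _ _ "{x,b}" "{y,a}"])
    apply (rule adj_intro; (use inP x y d in simp)?)
    using sepB[OF aE, of c a x b] e1 e2 e3 x apply simp
    apply (rule adj_intro; (use inP x y d in simp)?)
    using sepB[OF aF, of x b y a] f2 f3 x y apply simp
    apply (rule adj_intro; (use inP x y d in simp)?)
    using sepB[OF aF, of c b y a] f1 f2 f3 y apply simp
    by simp
qed

lemma sh_4:
  assumes x: "x \<in> P" "LE x < 0" "LF x < 0" and y: "y \<in> P" "LE y > 0" "LF y > 0"
  shows "close P 4 {c,a} {c,b}"
proof -
  have d: "c \<noteq> a" "c \<noteq> b" "y \<noteq> b" "y \<noteq> a" "c \<noteq> x" using e1 e2 e3 f1 f2 f3 x y by auto
  show ?thesis
    apply (rule close4[of _ _ "{b,y}" "{c,x}" "{a,y}"])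
    apply (rule adj_intro; (use inP x y d in simp)?)
    using sepB[OF aE, of c a b y] e1 e2 e3 y apply simp
    apply (rule adj_intro; (use inP x y d in simp)?)
    using sepB[OF aE, of c x b y] e1 e3 x y apply simp
    apply (rule adj_intro; (use inP x y d in simp)?)
    using sepB[OF aF, of c x a y] f1 f3 x y apply simp
    apply (rule adj_intro; (use inP x y d in simp)?)
    using sepB[OF aF, of c b a y] f1 f2 f3 y apply simp
    by simp
qed

definition bad where
  "bad x y \<longleftrightarrow> (LE x < 0 \<and> LF x < 0 \<and> LE y > 0 \<and> LF y > 0) \<or> (LE y < 0 \<and> LF y < 0 \<and> LE x > 0 \<and> LF x > 0)"

lemma sh_pair:
  assumes x: "x \<in> P" "LE x \<noteq> 0" "LF x \<noteq> 0"
    and y: "y \<in> P" "LE y \<noteq> 0" "LF y \<noteq> 0" "x \<noteq> y"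
  shows "close P 4 {c,a} {c,b} \<and> (\<not> bad x y \<longrightarrow> close P 3 {c,a} {c,b})
     \<and> (LE x * LE y > 0 \<and> LF x * LF y > 0 \<longrightarrow> close P 2 {c,a} {c,b})"
proof -
  have sx: "LE x > 0 \<or> LE x < 0" "LF x > 0 \<or> LF x < 0" "LE y > 0 \<or> LE y < 0" "LF y > 0 \<or> LF y < 0"
    using x y by auto
  have y': "y \<noteq> x" using y by simp
  note L = sh_negE[OF x(1) y(1) y(4)] sh_negE[OF y(1) x(1) y'] sh_negF[OF x(1) y(1) y(4)]
    sh_negF[OF y(1) x(1) y']
    sh_pp[OF x(1) y(1) y(4)] sh_3a[OF x(1) _ _ y(1) _ y(3)] sh_3a[OF y(1) _ _ x(1) _ x(3)]
    sh_3b[OF x(1) _ _ y(1) _ y(2)] sh_3b[OF y(1) _ _ x(1) _ x(2)] sh_4[OF x(1) _ _ y(1)] sh_4[OF y(1) _ _ x(1)]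
  have m: "close P 2 {c,a} {c,b} \<Longrightarrow> close P 3 {c,a} {c,b}"
     "close P 3 {c,a} {c,b} \<Longrightarrow> close P 4 {c,a} {c,b}"
    using close_mono by auto
  show ?thesis
    using sx L m unfolding bad_def zero_less_mult_iff
    by (smt (verit))
qed

end

lemma obtain_new:
  assumes "finite S" "card R > card S"
  shows "\<exists>z\<in>R. z \<notin> S"
proof (rule ccontr)
  assume "\<not> ?thesis"
  then have "R \<subseteq> S" by auto
  then have "card R \<le> card S" using card_mono[OF assms(1)] by blast
  then show False using assms(2) by simp
qed

lemma pigeon4:
  fixes f :: "'a \<Rightarrow> bool \<times> bool"
  assumes "finite R" "card R > 4"
  shows "\<exists>x\<in>R. \<exists>y\<in>R. x \<noteq> y \<and> f x = f y"
proof (rule ccontr)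
  assume "\<not> ?thesis"
  then have "inj_on f R" unfolding inj_on_def by blast
  then have "card R \<le> card (UNIV :: (bool \<times> bool) set)"
    by (rule card_inj_on_le) auto
  moreover have "card (UNIV :: (bool \<times> bool) set) = 4"
    by (simp add: card_cartesian_product flip: UNIV_Times_UNIV)
  ultimately show False using assms by simp
qed

lemma sgn_prod: "(u::real) \<noteq> 0 \<Longrightarrow> w \<noteq> 0 \<Longrightarrow> (u > 0) = (w > 0) \<Longrightarrow> u * w > 0"
  by (auto simp: zero_less_mult_iff)

definition orient :: "real^2 \<Rightarrow> real^2 \<Rightarrow> real^2 \<Rightarrow> real^2 \<Rightarrow> real" where
  "orient p q r z = (if cross p q r > 0 then cross p q z else - cross p q z)"

lemma affl_orient: "affl (orient p q r)"
  unfolding orient_def using affl_cross[of p q] affl_neg[OF affl_cross[of p q]]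
  by (cases "cross p q r > 0") auto

lemma orient_zero: "orient p q r p = 0" "orient p q r q = 0"
  unfolding orient_def by (auto simp: cross_self)

lemma orient_pos: "cross p q r \<noteq> 0 \<Longrightarrow> orient p q r r > 0"
  unfolding orient_def by auto

lemma orient_nz: "cross p q z \<noteq> 0 \<Longrightarrow> orient p q r z \<noteq> 0"
  unfolding orient_def by auto

lemma shared_case:
  assumes P: "finite P" "card P \<ge> 5" "general_position P"
    and c: "c \<in> P" "a \<in> P" "b \<in> P" "c \<noteq> a" "c \<noteq> b" "a \<noteq> b"
  shows "close P 4 {c,a} {c,b} \<and> (card P \<ge> 6 \<longrightarrow> close P 3 {c,a} {c,b})
     \<and> (card P \<ge> 9 \<longrightarrow> close P 2 {c,a} {c,b})"
proof -
  define LE where "LE = orient c a b"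
  define LF where "LF = orient c b a"
  have gp: "\<And>p q r. p \<in> P \<Longrightarrow> q \<in> P \<Longrightarrow> r \<in> P \<Longrightarrow> p \<noteq> q \<Longrightarrow> p \<noteq> r \<Longrightarrow> q \<noteq> r \<Longrightarrow> cross p q r \<noteq> 0"
    using gp_cross[OF P(3)] by blast
  interpret sconf P LE LF c a b
    apply unfold_locales
    unfolding LE_def LF_def
    using affl_orient orient_zero orient_pos gp c by auto
  define R where "R = P - {c,a,b}"
  have fR: "finite R" using P unfolding R_def by simp
  have cR: "card R = card P - 3" unfolding R_def using P c
    by (subst card_Diff_subset) auto
  have nz: "\<And>z. z \<in> R \<Longrightarrow> LE z \<noteq> 0 \<and> LF z \<noteq> 0 \<and> z \<in> P"
    unfolding LE_def LF_def R_def using orient_nz gp c by auto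
  have "card R > card {}" using cR P by simp
  then obtain x where x: "x \<in> R" using obtain_new[of "{}" R] by auto
  have "card R > card {x}" using cR P by simp
  then obtain y where y: "y \<in> R" "y \<noteq> x" using obtain_new[of "{x}" R] by auto
  have G: "close P 4 {c,a} {c,b} \<and> (\<not> bad p q \<longrightarrow> close P 3 {c,a} {c,b})
     \<and> (LE p * LE q > 0 \<and> LF p * LF q > 0 \<longrightarrow> close P 2 {c,a} {c,b})"
    if "p \<in> R" "q \<in> R" "p \<noteq> q" for p q
  proof -
    have "LE p \<noteq> 0 \<and> LF p \<noteq> 0 \<and> p \<in> P" "LE q \<noteq> 0 \<and> LF q \<noteq> 0 \<and> q \<in> P"
      using nz that by blast+
    then show ?thesis using sh_pair[of p q] that(3) by blast
  qed
  have pxy: "close P 4 {c,a} {c,b}" using G[OF x y(1)] y(2) by blast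
  have six: "close P 3 {c,a} {c,b}" if "card P \<ge> 6"
  proof -
    have "card {x,y} = 2" using y(2) by simp
    then have "card R > card {x,y}" using cR that by arith
    then obtain z where z: "z \<in> R" "z \<notin> {x,y}" using obtain_new[of "{x,y}" R] by auto
    have "\<not> bad x y \<or> \<not> bad x z \<or> \<not> bad y z" unfolding bad_def by linarith
    then show ?thesis
      using G[OF x y(1)] G[OF x z(1)] G[OF y(1) z(1)] y(2) z(2) by blast
  qed
  have nine: "close P 2 {c,a} {c,b}" if "card P \<ge> 9"
  proof -
    have "card R > 4" using cR that by simp
    then obtain p q where pq: "p \<in> R" "q \<in> R" "p \<noteq> q" "(LE p > 0, LF p > 0) = (LE q > 0, LF q > 0)"
      using pigeon4[OF fR, of "\<lambda>z. (LE z > 0, LF z > 0)"] by auto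
    have "LE p * LE q > 0" "LF p * LF q > 0"
      using nz[OF pq(1)] nz[OF pq(2)] pq(4) sgn_prod by auto
    then show ?thesis using G[OF pq(1-3)] by blast
  qed
  show ?thesis using pxy six nine by auto
qed

lemma cross_case:
  assumes P: "finite P" "card P \<ge> 5" "general_position P"
    and c: "a1 \<in> P" "a2 \<in> P" "b1 \<in> P" "b2 \<in> P" "distinct [a1,a2,b1,b2]"
    and nd: "\<not> segdisj a1 a2 b1 b2"
  shows "close P 4 {a1,a2} {b1,b2} \<and> (card P \<ge> 6 \<longrightarrow> close P 3 {a1,a2} {b1,b2})
     \<and> (card P \<ge> 9 \<longrightarrow> close P 2 {a1,a2} {b1,b2})"
proof -
  define LE where "LE = orient a1 a2 b1"
  define LF where "LF = orient b1 b2 a1"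
  have gp: "\<And>p q r. p \<in> P \<Longrightarrow> q \<in> P \<Longrightarrow> r \<in> P \<Longrightarrow> p \<noteq> q \<Longrightarrow> p \<noteq> r \<Longrightarrow> q \<noteq> r \<Longrightarrow> cross p q r \<noteq> 0"
    using gp_cross[OF P(3)] by blast
  have aE: "affl LE" and aF: "affl LF" unfolding LE_def LF_def by (rule affl_orient)+
  have e: "LE a1 = 0" "LE a2 = 0" "LE b1 > 0" "LE b2 \<noteq> 0"
    unfolding LE_def using orient_zero orient_pos orient_nz gp c by auto
  have f: "LF b1 = 0" "LF b2 = 0" "LF a1 > 0" "LF a2 \<noteq> 0"
    unfolding LF_def using orient_zero orient_pos orient_nz gp c by auto
  have e4: "LE b2 < 0"
  proof (rule ccontr)
    assume "\<not> LE b2 < 0"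
    then have "LE b2 > 0" using e by auto
    then show False using sepB[OF aE, of a1 a2 b1 b2] e nd by auto
  qed
  have f4: "LF a2 < 0"
  proof (rule ccontr)
    assume "\<not> LF a2 < 0"
    then have "LF a2 > 0" using f by auto
    then show False using sepB[OF aF, of b1 b2 a1 a2] f nd by auto
  qed
  interpret xconf P LE LF a1 a2 b1 b2
    by unfold_locales (use aE aF e f e4 f4 c in auto)
  define R where "R = P - {a1,a2,b1,b2}"
  have fR: "finite R" using P unfolding R_def by simp
  have cR: "card R = card P - 4" unfolding R_def using P c
    by (subst card_Diff_subset) auto
  have nz: "\<And>z. z \<in> R \<Longrightarrow> LE z \<noteq> 0 \<and> LF z \<noteq> 0 \<and> z \<in> P"
    unfolding LE_def LF_def R_def using orient_nz gp c by auto
  have "card R > card {}" using cR P by simp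
  then obtain x where x: "x \<in> R" using obtain_new[of "{}" R] by auto
  have four: "close P 4 {a1,a2} {b1,b2}" using one_gen nz[OF x] by auto
  have six: "close P 3 {a1,a2} {b1,b2}" if "card P \<ge> 6"
  proof -
    have "card R > card {x}" using cR that by simp
    then obtain y where y: "y \<in> R" "y \<noteq> x" using obtain_new[of "{x}" R] by auto
    show ?thesis using two_gen[of x y] nz[OF x] nz[OF y(1)] y(2) by auto
  qed
  have nine: "close P 2 {a1,a2} {b1,b2}" if "card P \<ge> 9"
  proof -
    have "card R > 4" using cR that by simp
    then obtain p q where pq: "p \<in> R" "q \<in> R" "p \<noteq> q" "(LE p > 0, LF p > 0) = (LE q > 0, LF q > 0)"
      using pigeon4[OF fR, of "\<lambda>z. (LE z > 0, LF z > 0)"] by auto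
    have "LE p * LE q > 0" "LF p * LF q > 0"
      using nz[OF pq(1)] nz[OF pq(2)] pq(4) sgn_prod by auto
    then show ?thesis
      using same_core[of p q] nz[OF pq(1)] nz[OF pq(2)] pq(3) by blast
  qed
  show ?thesis using four six nine by auto
qed

lemma main_close:
  assumes P: "finite P" "card P \<ge> 5" "general_position P"
    and uv: "u \<in> seg_vertices P" "v \<in> seg_vertices P"
  shows "close P 4 u v \<and> (card P \<ge> 6 \<longrightarrow> close P 3 u v) \<and> (card P \<ge> 9 \<longrightarrow> close P 2 u v)"
proof -
  obtain a1 a2 where a: "u = {a1,a2}" "a1 \<in> P" "a2 \<in> P" "a1 \<noteq> a2"
    using uv(1) unfolding seg_vertices_def by auto
  obtain b1 b2 where b: "v = {b1,b2}" "b1 \<in> P" "b2 \<in> P" "b1 \<noteq> b2"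
    using uv(2) unfolding seg_vertices_def by auto
  show ?thesis
  proof (cases "u = v")
    case True then show ?thesis using close0[OF uv(1)] by simp
  next
    case neq: False
    show ?thesis
    proof (cases "segdisj a1 a2 b1 b2")
      case True
      then have "disj_adj P u v" using adj_intro a b by simp
      then show ?thesis using close1 by auto
    next
      case nd: False
      show ?thesis
      proof (cases "distinct [a1,a2,b1,b2]")
        case True
        then show ?thesis using cross_case[OF P a(2,3) b(2,3) True nd] a b by simp
      next
        case False
        then have "a1 = b1 \<or> a1 = b2 \<or> a2 = b1 \<or> a2 = b2" using a b by auto
        moreover
        { assume h: "a1 = b1"
          then have "a2 \<noteq> b2" using neq a b by auto
          then have ?thesis using shared_case[OF P, of a1 a2 b2] a b h by auto }
        moreover
        { assume h: "a1 = b2"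
          then have "a2 \<noteq> b1" using neq a b by auto
          moreover have "v = {a1, b1}" using b h by auto
          ultimately have ?thesis using shared_case[OF P, of a1 a2 b1] a b h by auto }
        moreover
        { assume h: "a2 = b1"
          then have "a1 \<noteq> b2" using neq a b by auto
          moreover have "u = {a2, a1}" using a by auto
          ultimately have ?thesis using shared_case[OF P, of a2 a1 b2] a b h by auto }
        moreover
        { assume h: "a2 = b2"
          then have "a1 \<noteq> b1" using neq a b by auto
          moreover have "u = {a2, a1}" "v = {a2, b1}" using a b h by auto
          ultimately have ?thesis using shared_case[OF P, of a2 a1 b1] a b h by auto }
        ultimately show ?thesis by blast
      qed
    qed
  qed
qed

lemma dist_le:
  assumes "close P k u v"
  shows "graph_dist (seg_vertices P) (disj_adj P) u v \<le> k"
proof -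
  obtain j where "j \<le> k" "walk_of_len (seg_vertices P) (disj_adj P) u v j"
    using assms unfolding close_def by auto
  then show ?thesis unfolding graph_dist_def by (meson Least_le order_trans)
qed

lemma dist_ge2:
  assumes c: "close P 4 u v" and uv: "u \<noteq> v" and nadj: "\<not> disj_adj P u v"
  shows "graph_dist (seg_vertices P) (disj_adj P) u v \<ge> 2"
proof -
  let ?W = "walk_of_len (seg_vertices P) (disj_adj P) u v"
  have ex: "\<exists>k. ?W k" using c unfolding close_def by auto
  have W: "?W (LEAST k. ?W k)" using LeastI_ex[OF ex] .
  have n0: "\<not> ?W 0"
  proof
    assume "?W 0"
    then obtain xs where "length xs = 1" "hd xs = u" "last xs = v"
      unfolding walk_of_len_def by auto
    then show False using uv by (cases xs) auto
  qed
  have n1: "\<not> ?W 1"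
  proof
    assume "?W 1"
    then obtain xs where xs: "is_walk (seg_vertices P) (disj_adj P) xs" "length xs = 2" "hd xs = u" "last xs = v"
      unfolding walk_of_len_def by auto
    then obtain x y where "xs = [x,y]"
      by (metis (no_types, opaque_lifting) One_nat_def Suc_1 length_0_conv length_Suc_conv)
    then show False using xs nadj by (auto simp: is_walk_Cons2)
  qed
  have "(LEAST k. ?W k) \<noteq> 0" "(LEAST k. ?W k) \<noteq> 1" using W n0 n1 by metis+
  then show ?thesis unfolding graph_dist_def by linarith
qed

theorem theorem1:
  fixes P :: "(real^2) set"
  assumes "finite P" and "card P \<ge> 5" and "general_position P"
  shows "graph_connected (seg_vertices P) (disj_adj P) \<and>
         (card P = 5 \<longrightarrow> diam_D P \<in> {2, 3, 4}) \<and>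
         (card P \<in> {6, 7, 8} \<longrightarrow> diam_D P \<in> {2, 3}) \<and>
         (card P \<ge> 9 \<longrightarrow> diam_D P = 2)"
proof -
  note P = assms
  let ?V = "seg_vertices P"
  let ?E = "disj_adj P"
  have MC: "\<And>u v. u \<in> ?V \<Longrightarrow> v \<in> ?V \<Longrightarrow> close P 4 u v \<and> (card P \<ge> 6 \<longrightarrow> close P 3 u v) \<and> (card P \<ge> 9 \<longrightarrow> close P 2 u v)"
    using main_close[OF P] by blast
  have conn: "graph_connected ?V ?E"
    unfolding graph_connected_def using MC unfolding close_def by blast
  have fV: "finite ?V"
  proof -
    have "?V \<subseteq> Pow P" unfolding seg_vertices_def by auto
    then show ?thesis using P(1) finite_subset by blast
  qed
  define S where "S = {graph_dist ?V ?E u v | u v. u \<in> ?V \<and> v \<in> ?V}"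
  have SI: "S = (\<lambda>(u,v). graph_dist ?V ?E u v) ` (?V \<times> ?V)" unfolding S_def by auto
  have fS: "finite S" unfolding SI using fV by simp
  have dm: "diam_D P = Max S" unfolding graph_diam_def S_def by simp
  have ub: "Max S \<le> k" if "\<And>u v. u \<in> ?V \<Longrightarrow> v \<in> ?V \<Longrightarrow> close P k u v" for k
  proof -
    have "S \<noteq> {}"
    proof -
      obtain p where p: "p \<in> P" using obtain_new[of "{}" P] P by auto
      obtain q where q: "q \<in> P" "q \<noteq> p" using obtain_new[of "{p}" P] P by auto
      have "{p,q} \<in> ?V" unfolding seg_vertices_def using p q by auto
      then show ?thesis unfolding S_def by auto
    qed
    moreover have "\<forall>s\<in>S. s \<le> k" unfolding S_def using that dist_le by blast
    ultimately show ?thesis using fS by simp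
  qed
  have lb: "Max S \<ge> 2"
  proof -
    obtain p where p: "p \<in> P" using obtain_new[of "{}" P] P by auto
    obtain q where q: "q \<in> P" "q \<noteq> p" using obtain_new[of "{p}" P] P by auto
    have "card {p,q} = 2" using q by simp
    then have "card P > card {p,q}" using P by simp
    then obtain r where r: "r \<in> P" "r \<notin> {p,q}" using obtain_new[of "{p,q}" P] by auto
    have u: "{p,q} \<in> ?V" and v: "{p,r} \<in> ?V" unfolding seg_vertices_def using p q r by auto
    have ne: "{p,q} \<noteq> {p,r}" using q r by (auto simp: doubleton_eq_iff)
    have na: "\<not> ?E {p,q} {p,r}"
      unfolding disj_adj_def using q r by (auto simp: seg_of_pair)
    have "graph_dist ?V ?E {p,q} {p,r} \<ge> 2"
      using dist_ge2[OF _ ne na] MC[OF u v] by blast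
    moreover have "graph_dist ?V ?E {p,q} {p,r} \<in> S" unfolding S_def using u v by blast
    ultimately show ?thesis using fS by (meson Max_ge order_trans)
  qed
  have d4: "Max S \<le> 4" using ub MC by blast
  have d3: "card P \<ge> 6 \<Longrightarrow> Max S \<le> 3" using ub MC by blast
  have d2: "card P \<ge> 9 \<Longrightarrow> Max S \<le> 2" using ub MC by blast
  show ?thesis
    unfolding dm using conn d4 d3 d2 lb by auto
qed

end
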